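(* Let $n\ge 1$ and $k\ge 1$ be integers and let $m=kn+1$ or $m=kn-1$ (with $m\ge 1$). Then the map $\Delta\mapsto G_m(\Delta)$ is a bijection from the set of zero-normalized $\Gamma_{m,n}$-semimodules onto $Y_{m,n}$.
   Context: Let $m,n$ be coprime positive integers and $\Gamma_{m,n}=\{am+bn: a,b\in\mathbb{Z}_{\ge0}\}$. A $\Gamma_{m,n}$-semimodule is a subset $\Delta\subset\mathbb{Z}_{\ge0}$ with $\Delta+\Gamma_{m,n}\subset\Delta$; it is zero-normalized if $\min\Delta=0$. An $m$-generator of $\Delta$ is an element $a\in\Delta$ with $a-m\notin\Delta$; there are exactly $m$ of them, $a_1<\dots<a_m$. Put $g_m(x)=\#\big(([x,x+n)\cap\mathbb{Z})\setminus\Delta\big)$. The numbers $g_m(a_1)\ge g_m(a_2)\ge\dots\ge g_m(a_m)$ are weakly decreasing, and $G_m(\Delta)$ denotes the Young diagram whose column heights are $g_m(a_1),\dots,g_m(a_m)$. $Y_{m,n}$ denotes the set of Young diagrams (French convention) with column heights $h_1\ge\dots\ge h_m\ge0$ such that each box in column $i$, row $j$ ($1\le j\le h_i$) satisfies $i/m+j/n\le 1$, i.e. diagrams in the $m\times n$ rectangle (width $m$, height $n$) below the diagonal; $G_m(\Delta)\in Y_{m,n}$. *)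

theory Defs
  imports Complex_Main
begin

definition Gamma :: "nat \<Rightarrow> nat \<Rightarrow> nat set" where
  "Gamma m n = {a * m + b * n | a b. True}"

definition semimodule :: "nat \<Rightarrow> nat \<Rightarrow> nat set \<Rightarrow> bool" where
  "semimodule m n D \<longleftrightarrow> (\<forall>x\<in>D. \<forall>g\<in>Gamma m n. x + g \<in> D)"

definition zero_normalized :: "nat set \<Rightarrow> bool" where
  "zero_normalized D \<longleftrightarrow> D \<noteq> {} \<and> (LEAST x. x \<in> D) = 0"

text \<open>m-generators: a in D with a - m not in D (a - m is negative when a < m).\<close>
definition m_generators :: "nat \<Rightarrow> nat set \<Rightarrow> nat set" where
  "m_generators m D = {a \<in> D. a < m \<or> a - m \<notin> D}"

definition g_fun :: "nat \<Rightarrow> nat set \<Rightarrow> nat \<Rightarrow> nat" where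
  "g_fun n D x = card ({x..<x+n} - D)"

text \<open>Young diagrams with m columns are represented by the list of their column heights
  [h_1, ..., h_m].  G_m(D) is the list g_m(a_1), ..., g_m(a_m) with a_1 < ... < a_m
  the m-generators.\<close>
definition G_m :: "nat \<Rightarrow> nat \<Rightarrow> nat set \<Rightarrow> nat list" where
  "G_m m n D = map (g_fun n D) (sorted_list_of_set (m_generators m D))"

text \<open>Y_{m,n}: column heights h_1 \<ge> ... \<ge> h_m \<ge> 0 such that each box (column i, row j,
  1 \<le> j \<le> h_i) satisfies i/m + j/n \<le> 1.  (Column i is list index i-1.)\<close>
definition Y :: "nat \<Rightarrow> nat \<Rightarrow> nat list set" where
  "Y m n = {h. length h = m \<and> sorted_wrt (\<ge>) h \<and>
     (\<forall>i<m. \<forall>j. 1 \<le> j \<and> j \<le> h ! i \<longrightarrow>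
        real (i + 1) / real m + real j / real n \<le> 1)}"

end

theory Submission
  imports Defs
begin


definition lexl :: "nat \<times> nat \<Rightarrow> nat \<times> nat \<Rightarrow> bool" where
  "lexl x y \<longleftrightarrow> fst x < fst y \<or> (fst x = fst y \<and> snd x < snd y)"

definition Lf :: "bool \<Rightarrow> nat \<Rightarrow> nat \<Rightarrow> (nat \<Rightarrow> nat) \<Rightarrow> nat \<Rightarrow> nat" where
  "Lf e k n u r = (if e then (if r = 0 then u (n - 1) + k + 1 else u (r - 1) + k)
                   else (if Suc r = n then k - 1 else u (Suc r) + k))"

definition As :: "bool \<Rightarrow> nat \<Rightarrow> nat \<Rightarrow> (nat \<Rightarrow> nat) \<Rightarrow> (nat \<times> nat) set" where
  "As e k n u = {x. snd x < n \<and> u (snd x) < fst x \<and> fst x \<le> Lf e k n u (snd x)}"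

definition Cs :: "nat \<Rightarrow> (nat \<Rightarrow> nat) \<Rightarrow> (nat \<times> nat) set" where
  "Cs n u = (\<lambda>r. (u r, r)) ` {..<n}"

definition cntC where "cntC n u x = card {y \<in> Cs n u. lexl x y}"
definition T where "T e k n u s = card {x \<in> As e k n u. s \<le> cntC n u x}"
definition NN where "NN e k n w c = card {x \<in> As e k n w. lexl x c}"

definition V :: "bool \<Rightarrow> nat \<Rightarrow> nat \<Rightarrow> (nat \<Rightarrow> nat) \<Rightarrow> bool" where
  "V e k n u \<longleftrightarrow> u 0 = 0 \<and> (if e then (\<forall>r. 0 < r \<and> r < n \<longrightarrow> u r \<le> u (r - 1) + k)
        else (\<forall>r. Suc r < n \<longrightarrow> u r \<le> u (Suc r) + k) \<and> u (n - 1) \<le> k - 1)"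

definition VC :: "bool \<Rightarrow> nat \<Rightarrow> nat \<Rightarrow> (nat \<Rightarrow> nat) \<Rightarrow> nat \<times> nat \<Rightarrow> bool" where
  "VC e k n w c \<longleftrightarrow> 1 \<le> snd c \<and> snd c \<le> n \<and> (\<forall>i < snd c. w i \<le> fst c)
     \<and> (\<forall>i. snd c \<le> i \<and> i < n \<longrightarrow> w i < fst c)
     \<and> (if e then fst c \<le> w (snd c - 1) + k
        else (snd c < n \<longrightarrow> fst c \<le> w (snd c) + k) \<and> (snd c = n \<longrightarrow> fst c \<le> k - 1))"

definition del :: "nat \<Rightarrow> (nat \<Rightarrow> nat) \<Rightarrow> nat \<Rightarrow> nat" where
  "del p u = (\<lambda>i. if i < p then u i else u (Suc i))"

definition ins :: "nat \<Rightarrow> nat \<Rightarrow> nat" where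
  "ins p r = (if r < p then r else Suc r)"

definition FF :: "nat \<Rightarrow> nat \<times> nat \<Rightarrow> nat \<times> nat" where
  "FF p x = (fst x, ins p (snd x))"

lemma lexl_trans: "lexl x y \<Longrightarrow> lexl y z \<Longrightarrow> lexl x z"
  unfolding lexl_def by auto
lemma lexl_irrefl: "\<not> lexl x x" unfolding lexl_def by auto
lemma lexl_total: "x \<noteq> y \<Longrightarrow> lexl x y \<or> lexl y x"
  unfolding lexl_def by (cases x; cases y) auto

lemma finite_Cs: "finite (Cs n u)" unfolding Cs_def by simp

lemma finite_As: "finite (As e k n u)"
proof -
  have "As e k n u \<subseteq> {..(\<Sum>r<n. Lf e k n u r)} \<times> {..<n}"
  proof
    fix x assume x: "x \<in> As e k n u"
    then have "snd x < n" "fst x \<le> Lf e k n u (snd x)" unfolding As_def by auto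
    moreover have "Lf e k n u (snd x) \<le> (\<Sum>r<n. Lf e k n u r)"
      using \<open>snd x < n\<close> by (intro member_le_sum) auto
    ultimately show "x \<in> {..(\<Sum>r<n. Lf e k n u r)} \<times> {..<n}"
      by (cases x) auto
  qed
  then show ?thesis by (rule finite_subset) auto
qed

lemma ins_mono: "lexl x y \<longleftrightarrow> lexl (FF p x) (FF p y)"
  unfolding lexl_def FF_def ins_def by auto

lemma FF_inj: "inj (FF p)"
  unfolding inj_def FF_def ins_def by (auto split: if_splits simp: prod_eq_iff)

lemma cut_pres: "lexl (FF p x) (M, p) \<longleftrightarrow> lexl x (M, p)"
  unfolding lexl_def FF_def ins_def by auto

locale delctx =
  fixes e :: bool and k n :: nat and u :: "nat \<Rightarrow> nat" and p :: nat
  assumes Vu: "V e k n u" and n2: "2 \<le> n" and k1: "1 \<le> k" and pn: "p < n"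
    and pmax: "\<forall>r<n. u r \<le> u p" and plast: "\<forall>r. p < r \<and> r < n \<longrightarrow> u r < u p"
begin

lemma p1: "1 \<le> p"
proof (rule ccontr)
  assume "\<not> 1 \<le> p" then have "p = 0" by simp
  with plast n2 have "u 1 < u 0" by auto
  with Vu show False unfolding V_def by simp
qed

lemma Vp: "e \<Longrightarrow> 0 < r \<Longrightarrow> r < n \<Longrightarrow> u r \<le> u (r - 1) + k"
  using Vu unfolding V_def by auto
lemma Vm: "\<not> e \<Longrightarrow> Suc r < n \<Longrightarrow> u r \<le> u (Suc r) + k"
  using Vu unfolding V_def by auto
lemma Vm2: "\<not> e \<Longrightarrow> u (n - 1) \<le> k - 1"
  using Vu unfolding V_def by auto
lemma u0: "u 0 = 0" using Vu unfolding V_def by auto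

lemma W_valid: "V e k (n - 1) (del p u)"
proof (cases e)
  case True
  have "del p u 0 = 0" using p1 u0 unfolding del_def by auto
  moreover have "del p u r \<le> del p u (r - 1) + k" if "0 < r" "r < n - 1" for r
  proof -
    consider "r < p" | "r = p" | "r > p" by arith
    then show ?thesis
    proof cases
      case 1 then show ?thesis using Vp[OF True, of r] that unfolding del_def by auto
    next
      case 2
      have "u (Suc p) \<le> u p" using pmax that 2 by auto
      also have "u p \<le> u (p - 1) + k" using Vp[OF True, of p] p1 pn by auto
      finally show ?thesis using 2 p1 unfolding del_def by auto
    next
      case 3 then show ?thesis using Vp[OF True, of "Suc r"] that unfolding del_def by auto
    qed
  qed
  ultimately show ?thesis using True unfolding V_def by auto
next
  case False
  have "del p u 0 = 0" using p1 u0 unfolding del_def by auto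
  moreover have "del p u r \<le> del p u (Suc r) + k" if "Suc r < n - 1" for r
  proof -
    consider "Suc r < p" | "Suc r = p" | "r \<ge> p" by arith
    then show ?thesis
    proof cases
      case 1 then show ?thesis using Vm[OF False, of r] that unfolding del_def by auto
    next
      case 2
      have "u r \<le> u p" using pmax that by auto
      also have "u p \<le> u (Suc p) + k" using Vm[OF False, of p] that 2 by auto
      finally show ?thesis using 2 unfolding del_def by auto
    next
      case 3 then show ?thesis using Vm[OF False, of "Suc r"] that unfolding del_def by auto
    qed
  qed
  moreover have "del p u (n - 1 - 1) \<le> k - 1"
  proof (cases "n - 2 < p")
    case True
    then have "p = n - 1" using pn by arith
    then have "u (n - 2) \<le> u p" "u p \<le> k - 1" using pmax Vm2[OF False] n2 by auto
    then show ?thesis using True unfolding del_def by (simp add: numeral_2_eq_2)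
  next
    case F: False
    then show ?thesis using Vm2[OF False] n2 unfolding del_def
      by (simp add: numeral_2_eq_2 Suc_diff_Suc)
  qed
  ultimately show ?thesis using False unfolding V_def by auto
qed

lemma VC_cut: "VC e k (n - 1) (del p u) (u p, p)"
proof -
  have a: "1 \<le> p" "p \<le> n - 1" using p1 pn by auto
  have b: "\<forall>i<p. del p u i \<le> u p" using pmax pn unfolding del_def by auto
  have c: "\<forall>i. p \<le> i \<and> i < n - 1 \<longrightarrow> del p u i < u p" using plast unfolding del_def by auto
  have d: "u p \<le> del p u (p - 1) + k" if e using Vp[OF that, of p] a pn unfolding del_def by auto
  have f: "u p \<le> del p u p + k" if "\<not> e" "p < n - 1" using Vm[OF that(1), of p] that unfolding del_def by auto
  have g: "u p \<le> k - 1" if "\<not> e" "p = n - 1" using Vm2[OF that(1)] that by auto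
  show ?thesis unfolding VC_def using a b c d f g by auto
qed

lemma Lshift:
  assumes r: "r < n - 1" and lx: "lexl (q, r) (u p, p)"
  shows "q \<le> Lf e k (n - 1) (del p u) r \<longleftrightarrow> q \<le> Lf e k n u (ins p r)"
proof (cases e)
  case True
  consider "r = 0" | "0 < r" "r < p" | "r = p" | "r > p" by arith
  then show ?thesis
  proof cases
    case 1
    show ?thesis
    proof (cases "p = n - 1")
      case True
      have q: "q \<le> u p" using lx 1 True n2 unfolding lexl_def by auto
      have "u p \<le> u (n - Suc (Suc 0)) + k" using Vp[OF \<open>e\<close>, of p] True n2 by (simp add: numeral_2_eq_2)
      then show ?thesis using 1 True q p1 \<open>e\<close> n2 unfolding Lf_def del_def ins_def by auto
    next
      case False
      have "Suc (n - Suc (Suc 0)) = n - Suc 0" using n2 by arith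
      then show ?thesis using 1 \<open>e\<close> p1 pn n2 False unfolding Lf_def del_def ins_def
        by (auto simp: numeral_2_eq_2)
    qed
  next
    case 2 then show ?thesis using \<open>e\<close> unfolding Lf_def del_def ins_def by auto
  next
    case 3
    have q: "q < u p" using lx 3 unfolding lexl_def by auto
    have "u p \<le> u (p - 1) + k" using Vp[OF \<open>e\<close>, of p] p1 pn by auto
    then show ?thesis using 3 q p1 \<open>e\<close> unfolding Lf_def del_def ins_def by auto
  next
    case 4 then show ?thesis using \<open>e\<close> unfolding Lf_def del_def ins_def by auto
  qed
next
  case False
  consider "Suc r < p" | "Suc r = p" | "r \<ge> p" by arith
  then show ?thesis
  proof cases
    case 1 then show ?thesis using False pn unfolding Lf_def del_def ins_def by auto
  next
    case 2
    have q: "q \<le> u p" using lx 2 unfolding lexl_def by auto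
    show ?thesis
    proof (cases "p = n - 1")
      case True
      have "u p \<le> k - 1" using Vm2[OF False] True by simp
      then show ?thesis using 2 q False True pn unfolding Lf_def del_def ins_def by auto
    next
      case F: False
      have "u p \<le> u (Suc p) + k" using Vm[OF False, of p] F pn by auto
      then show ?thesis using 2 q False F pn unfolding Lf_def del_def ins_def by auto
    qed
  next
    case 3 then show ?thesis using False n2 unfolding Lf_def del_def ins_def by auto
  qed
qed

lemma del_ins: "del p u r = u (ins p r)"
  unfolding del_def ins_def by auto

lemma F3: "{x \<in> As e k n u. lexl x (u p, p)} = FF p ` {x \<in> As e k (n - 1) (del p u). lexl x (u p, p)}"
proof
  show "FF p ` {x \<in> As e k (n - 1) (del p u). lexl x (u p, p)} \<subseteq> {x \<in> As e k n u. lexl x (u p, p)}"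
  proof
    fix y assume "y \<in> FF p ` {x \<in> As e k (n - 1) (del p u). lexl x (u p, p)}"
    then obtain q r where x: "(q, r) \<in> As e k (n - 1) (del p u)" "lexl (q, r) (u p, p)" and y: "y = FF p (q, r)"
      by auto
    have r: "r < n - 1" "del p u r < q" "q \<le> Lf e k (n - 1) (del p u) r" using x unfolding As_def by auto
    have "ins p r < n" using r(1) unfolding ins_def by auto
    moreover have "u (ins p r) < q" using r(2) del_ins by simp
    moreover have "q \<le> Lf e k n u (ins p r)" using Lshift[OF r(1) x(2)] r(3) by simp
    moreover have "lexl y (u p, p)" using y cut_pres x(2) by simp
    ultimately show "y \<in> {x \<in> As e k n u. lexl x (u p, p)}" using y unfolding As_def FF_def by auto
  qed
next
  show "{x \<in> As e k n u. lexl x (u p, p)} \<subseteq> FF p ` {x \<in> As e k (n - 1) (del p u). lexl x (u p, p)}"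
  proof
    fix y assume "y \<in> {x \<in> As e k n u. lexl x (u p, p)}"
    then obtain q r where y: "y = (q, r)" "r < n" "u r < q" "q \<le> Lf e k n u r" "lexl (q, r) (u p, p)"
      unfolding As_def by (cases y) auto
    have rp: "r \<noteq> p" using y unfolding lexl_def by auto
    define r' where "r' = (if r < p then r else r - 1)"
    have ir: "ins p r' = r" using rp unfolding r'_def ins_def by auto
    have r'n: "r' < n - 1" using rp y(2) pn unfolding r'_def by auto
    have fy: "FF p (q, r') = y" using ir y unfolding FF_def by simp
    have lx: "lexl (q, r') (u p, p)" using cut_pres[of p "(q, r')"] fy y by simp
    have "(q, r') \<in> As e k (n - 1) (del p u)"
      using r'n y Lshift[OF r'n lx] ir del_ins[of r'] unfolding As_def by auto
    then show "y \<in> FF p ` {x \<in> As e k (n - 1) (del p u). lexl x (u p, p)}"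
      using fy lx by force
  qed
qed

lemma Cs_split: "Cs n u = insert (u p, p) (FF p ` Cs (n - 1) (del p u))"
proof
  show "Cs n u \<subseteq> insert (u p, p) (FF p ` Cs (n - 1) (del p u))"
  proof
    fix y assume "y \<in> Cs n u"
    then obtain r where r: "r < n" "y = (u r, r)" unfolding Cs_def by auto
    show "y \<in> insert (u p, p) (FF p ` Cs (n - 1) (del p u))"
    proof (cases "r = p")
      case True then show ?thesis using r by simp
    next
      case False
      define r' where "r' = (if r < p then r else r - 1)"
      have ir: "ins p r' = r" using False unfolding r'_def ins_def by auto
      have r'n: "r' < n - 1" using False r(1) pn unfolding r'_def by auto
      have "y = FF p (del p u r', r')" using ir r del_ins[of r'] unfolding FF_def by simp
      then show ?thesis using r'n unfolding Cs_def by auto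
    qed
  qed
next
  show "insert (u p, p) (FF p ` Cs (n - 1) (del p u)) \<subseteq> Cs n u"
  proof
    fix y assume "y \<in> insert (u p, p) (FF p ` Cs (n - 1) (del p u))"
    then consider "y = (u p, p)" | r' where "r' < n - 1" "y = FF p (del p u r', r')"
      unfolding Cs_def by auto
    then show "y \<in> Cs n u"
    proof cases
      case 1 then show ?thesis using pn unfolding Cs_def by auto
    next
      case 2
      have "ins p r' < n" using 2 unfolding ins_def by auto
      then show ?thesis using 2 del_ins[of r'] unfolding Cs_def FF_def by auto
    qed
  qed
qed

lemma Cs_u_le: "y \<in> Cs n u \<Longrightarrow> y = (u p, p) \<or> lexl y (u p, p)"
proof -
  assume "y \<in> Cs n u"
  then obtain r where r: "r < n" "y = (u r, r)" unfolding Cs_def by auto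
  consider "r < p" | "r = p" | "r > p" by arith
  then show ?thesis
  proof cases
    case 1 then show ?thesis using pmax r unfolding lexl_def by (cases "u r = u p") auto
  next
    case 2 then show ?thesis using r by simp
  next
    case 3 then show ?thesis using plast r unfolding lexl_def by auto
  qed
qed

lemma Cs_w_lt: "y \<in> Cs (n - 1) (del p u) \<Longrightarrow> lexl y (u p, p)"
proof -
  assume "y \<in> Cs (n - 1) (del p u)"
  then obtain r where r: "r < n - 1" "y = (del p u r, r)" unfolding Cs_def by auto
  show ?thesis
  proof (cases "r < p")
    case True
    have "u r \<le> u p" using pmax r by auto
    then show ?thesis using True r unfolding lexl_def del_def
      by (cases "u r = u p") auto
  next
    case False then show ?thesis using plast r unfolding lexl_def del_def by auto
  qed
qed

lemma cnt_shift:
  assumes "lexl (FF p x) (u p, p)"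
  shows "cntC n u (FF p x) = Suc (cntC (n - 1) (del p u) x)"
proof -
  have "{y \<in> Cs n u. lexl (FF p x) y} = insert (u p, p) (FF p ` {y \<in> Cs (n - 1) (del p u). lexl x y})"
    using assms unfolding Cs_split by (auto simp: ins_mono[of x _ p])
  moreover have "(u p, p) \<notin> FF p ` {y \<in> Cs (n - 1) (del p u). lexl x y}"
    unfolding FF_def ins_def by (auto split: if_splits)
  moreover have "finite (FF p ` {y \<in> Cs (n - 1) (del p u). lexl x y})" using finite_Cs by auto
  ultimately show ?thesis unfolding cntC_def
    by (simp add: card_image inj_on_subset[OF FF_inj])
qed

lemma cnt_u_zero: "\<not> lexl x (u p, p) \<Longrightarrow> cntC n u x = 0"
proof -
  assume a: "\<not> lexl x (u p, p)"
  have h: "{y \<in> Cs n u. lexl x y} = {}"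
    using Cs_u_le a lexl_trans by blast
  show ?thesis unfolding cntC_def h by simp
qed

lemma cnt_w_zero: "\<not> lexl x (u p, p) \<Longrightarrow> cntC (n - 1) (del p u) x = 0"
proof -
  assume a: "\<not> lexl x (u p, p)"
  have h: "{y \<in> Cs (n - 1) (del p u). lexl x y} = {}"
    using Cs_w_lt a lexl_trans by blast
  show ?thesis unfolding cntC_def h by simp
qed

lemma T_shift:
  assumes s: "1 \<le> s"
  shows "T e k (n - 1) (del p u) s = T e k n u (Suc s)"
proof -
  let ?c = "(u p, p)"
  have "{x \<in> As e k n u. Suc s \<le> cntC n u x} = {x \<in> As e k n u. lexl x ?c \<and> Suc s \<le> cntC n u x}"
    using cnt_u_zero by fastforce
  also have "\<dots> = FF p ` {x \<in> As e k (n - 1) (del p u). lexl x ?c \<and> s \<le> cntC (n - 1) (del p u) x}"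
  proof -
    have "{x \<in> As e k n u. lexl x ?c \<and> Suc s \<le> cntC n u x}
       = {x \<in> {x \<in> As e k n u. lexl x ?c}. Suc s \<le> cntC n u x}" by auto
    also have "\<dots> = {x \<in> FF p ` {x \<in> As e k (n - 1) (del p u). lexl x ?c}. Suc s \<le> cntC n u x}"
      unfolding F3 ..
    also have "\<dots> = FF p ` {x \<in> As e k (n - 1) (del p u). lexl x ?c \<and> s \<le> cntC (n - 1) (del p u) x}"
    proof -
      let ?S = "{x \<in> As e k (n - 1) (del p u). lexl x ?c}"
      have "{x \<in> FF p ` ?S. Suc s \<le> cntC n u x} = FF p ` {x \<in> ?S. Suc s \<le> cntC n u (FF p x)}" by auto
      also have "{x \<in> ?S. Suc s \<le> cntC n u (FF p x)} = {x \<in> As e k (n - 1) (del p u). lexl x ?c \<and> s \<le> cntC (n - 1) (del p u) x}"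
        using cnt_shift cut_pres by auto
      finally show ?thesis .
    qed
    finally show ?thesis .
  qed
  finally have 1: "{x \<in> As e k n u. Suc s \<le> cntC n u x} =
     FF p ` {x \<in> As e k (n - 1) (del p u). lexl x ?c \<and> s \<le> cntC (n - 1) (del p u) x}" .
  have 2: "{x \<in> As e k (n - 1) (del p u). lexl x ?c \<and> s \<le> cntC (n - 1) (del p u) x}
      = {x \<in> As e k (n - 1) (del p u). s \<le> cntC (n - 1) (del p u) x}"
    using cnt_w_zero s by fastforce
  show ?thesis unfolding T_def 1 2
    by (simp add: card_image inj_on_subset[OF FF_inj])
qed

lemma T_one: "T e k n u 1 = NN e k (n - 1) (del p u) (u p, p)"
proof -
  have "{x \<in> As e k n u. 1 \<le> cntC n u x} = {x \<in> As e k n u. lexl x (u p, p)}"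
  proof safe
    fix x assume "x \<in> As e k n u" "1 \<le> cntC n u x"
    then show "lexl x (u p, p)" using cnt_u_zero by fastforce
  next
    fix x assume "x \<in> As e k n u" "lexl x (u p, p)"
    then have "(u p, p) \<in> {y \<in> Cs n u. lexl x y}" using pn unfolding Cs_def by auto
    then have "{y \<in> Cs n u. lexl x y} \<noteq> {}" by auto
    then show "1 \<le> cntC n u x" unfolding cntC_def using finite_Cs
      by (simp add: Suc_le_eq card_gt_0_iff)
  qed
  then show ?thesis unfolding T_def NN_def F3
    by (simp add: card_image inj_on_subset[OF FF_inj])
qed

end


lemma ex_last_max:
  fixes u :: "nat \<Rightarrow> nat"
  assumes "0 < (n::nat)"
  shows "\<exists>p<n. (\<forall>r<n. u r \<le> u p) \<and> (\<forall>r. p < r \<and> r < n \<longrightarrow> u r < u p)"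
proof -
  define M where "M = Max (u ` {..<n})"
  define S where "S = {r. r < n \<and> u r = M}"
  have fin: "finite S" unfolding S_def by auto
  have "M \<in> u ` {..<n}" unfolding M_def using assms by (intro Max_in) auto
  then have ne: "S \<noteq> {}" unfolding S_def by auto
  define p where "p = Max S"
  have pS: "p \<in> S" unfolding p_def using fin ne by (rule Max_in)
  have le: "\<forall>r<n. u r \<le> M" unfolding M_def by auto
  have "\<forall>r. p < r \<and> r < n \<longrightarrow> u r < M"
  proof (intro allI impI)
    fix r assume r: "p < r \<and> r < n"
    have "r \<notin> S" using r Max_ge[OF fin, of r] unfolding p_def by auto
    then show "u r < M" using le r unfolding S_def by force
  qed
  then show ?thesis using pS le unfolding S_def by auto
qed

lemma Lf_cong: "\<forall>r<n. w r = w' r \<Longrightarrow> r < n \<Longrightarrow> Lf e k n w r = Lf e k n w' r"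
  unfolding Lf_def by auto

lemma As_cong: "\<forall>r<n. w r = w' r \<Longrightarrow> As e k n w = As e k n w'"
  unfolding As_def using Lf_cong[of n w w'] by auto

lemma NN_cong: "\<forall>r<n. w r = w' r \<Longrightarrow> NN e k n w c = NN e k n w' c"
  unfolding NN_def using As_cong[of n w w'] by simp

lemma VC_cong: "\<forall>r<n. w r = w' r \<Longrightarrow> VC e k n w c \<Longrightarrow> VC e k n w' c"
  unfolding VC_def by (auto split: if_splits)

lemma NN_mono:
  assumes Vw: "V e k nw w" and nw: "1 \<le> nw" and c1: "VC e k nw w c1" and c2: "VC e k nw w c2"
    and lc: "lexl c1 c2"
  shows "NN e k nw w c1 < NN e k nw w c2"
proof -
  obtain v1 r1 where c1e: "c1 = (v1, r1)" by (cases c1)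
  obtain v2 r2 where c2e: "c2 = (v2, r2)" by (cases c2)
  have V1: "1 \<le> r1" "r1 \<le> nw" "\<forall>i<r1. w i \<le> v1" "\<forall>i. r1 \<le> i \<and> i < nw \<longrightarrow> w i < v1"
    using c1 unfolding VC_def c1e by auto
  have V2: "1 \<le> r2" "r2 \<le> nw" "\<forall>i<r2. w i \<le> v2" "\<forall>i. r2 \<le> i \<and> i < nw \<longrightarrow> w i < v2"
    using c2 unfolding VC_def c2e by auto
  have lc': "v1 < v2 \<or> (v1 = v2 \<and> r1 < r2)" using lc unfolding lexl_def c1e c2e by auto
  have "\<exists>a\<in>As e k nw w. \<not> lexl a c1 \<and> lexl a c2"
  proof (cases e)
    case True
    have w0: "w 0 = 0" using Vw unfolding V_def by auto
    have top1: "v1 \<le> w (r1 - 1) + k" using c1 True unfolding VC_def c1e by auto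
    show ?thesis
    proof (cases "r1 < nw")
      case True
      have "(v1, r1) \<in> As e k nw w" using True V1 top1 \<open>e\<close> unfolding As_def Lf_def by auto
      moreover have "\<not> lexl (v1, r1) c1" "lexl (v1, r1) c2" using lc lexl_irrefl c1e by auto
      ultimately show ?thesis by blast
    next
      case False
      then have r1n: "r1 = nw" using V1 by auto
      have "v1 < v2" using lc' r1n V2 by auto
      have "(Suc v1, 0) \<in> As e k nw w" using nw w0 top1 r1n \<open>e\<close> unfolding As_def Lf_def by auto
      moreover have "\<not> lexl (Suc v1, 0) c1" unfolding c1e lexl_def by auto
      moreover have "lexl (Suc v1, 0) c2" using \<open>v1 < v2\<close> V2 unfolding c2e lexl_def by auto
      ultimately show ?thesis by blast
    qed
  next
    case False
    have top2: "r2 < nw \<longrightarrow> v2 \<le> w r2 + k" "r2 = nw \<longrightarrow> v2 \<le> k - 1"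
      using c2 False unfolding VC_def c2e by auto
    have wlt: "w (r2 - 1) < v2"
    proof (cases "r1 \<le> r2 - 1")
      case True
      then have "w (r2 - 1) < v1" using V1 V2 by auto
      then show ?thesis using lc' by auto
    next
      case F: False
      then have "w (r2 - 1) \<le> v1" using V1 by auto
      moreover have "v1 < v2" using lc' F by auto
      ultimately show ?thesis by simp
    qed
    have "(v2, r2 - 1) \<in> As e k nw w"
    proof -
      have "Suc (r2 - 1) = r2" using V2 by simp
      then show ?thesis using wlt top2 V2 False unfolding As_def Lf_def by auto
    qed
    moreover have "\<not> lexl (v2, r2 - 1) c1" using lc' V2 unfolding c1e lexl_def by auto
    moreover have "lexl (v2, r2 - 1) c2" using V2 unfolding c2e lexl_def by auto
    ultimately show ?thesis by blast
  qed
  then obtain a where a: "a \<in> As e k nw w" "\<not> lexl a c1" "lexl a c2" by blast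
  have "{x \<in> As e k nw w. lexl x c1} \<subset> {x \<in> As e k nw w. lexl x c2}"
    using a lc lexl_trans by blast
  then show ?thesis unfolding NN_def by (intro psubset_card_mono) (auto intro: finite_subset[OF _ finite_As])
qed

lemma comb_inj:
  "1 \<le> k \<Longrightarrow> 1 \<le> n \<Longrightarrow> V e k n u1 \<Longrightarrow> V e k n u2 \<Longrightarrow> (\<forall>s\<ge>1. T e k n u1 s = T e k n u2 s)
   \<Longrightarrow> \<forall>r<n. u1 r = u2 r"
proof (induction n arbitrary: u1 u2)
  case 0 then show ?case by simp
next
  case (Suc n)
  show ?case
  proof (cases "n = 0")
    case True
    then show ?thesis using Suc.prems unfolding V_def by auto
  next
    case False
    obtain p1 where p1: "p1 < Suc n" "\<forall>r<Suc n. u1 r \<le> u1 p1" "\<forall>r. p1 < r \<and> r < Suc n \<longrightarrow> u1 r < u1 p1"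
      using ex_last_max[of "Suc n" u1] by auto
    obtain p2 where p2: "p2 < Suc n" "\<forall>r<Suc n. u2 r \<le> u2 p2" "\<forall>r. p2 < r \<and> r < Suc n \<longrightarrow> u2 r < u2 p2"
      using ex_last_max[of "Suc n" u2] by auto
    interpret d1: delctx e k "Suc n" u1 p1
      using Suc.prems p1 False by unfold_locales auto
    interpret d2: delctx e k "Suc n" u2 p2
      using Suc.prems p2 False by unfold_locales auto
    let ?w1 = "del p1 u1" and ?w2 = "del p2 u2"
    have Vw1: "V e k n ?w1" using d1.W_valid by simp
    have Vw2: "V e k n ?w2" using d2.W_valid by simp
    have "\<forall>s\<ge>1. T e k n ?w1 s = T e k n ?w2 s"
      using d1.T_shift d2.T_shift Suc.prems(5) by auto
    then have ww: "\<forall>r<n. ?w1 r = ?w2 r" using Suc.IH[OF Suc.prems(1) _ Vw1 Vw2] False by auto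
    have "NN e k n ?w1 (u1 p1, p1) = NN e k n ?w1 (u2 p2, p2)"
      using d1.T_one d2.T_one Suc.prems(5) NN_cong[OF ww] by auto
    moreover have vc1: "VC e k n ?w1 (u1 p1, p1)" using d1.VC_cut by simp
    moreover have vc2: "VC e k n ?w1 (u2 p2, p2)"
      using d2.VC_cut VC_cong[of n ?w2 ?w1] ww by simp
    ultimately have ceq: "(u1 p1, p1) = (u2 p2, p2)"
    proof -
      assume eq: "NN e k n ?w1 (u1 p1, p1) = NN e k n ?w1 (u2 p2, p2)"
      have n1: "1 \<le> n" using False by simp
      show ?thesis
      proof (rule ccontr)
        assume "(u1 p1, p1) \<noteq> (u2 p2, p2)"
        then consider "lexl (u1 p1, p1) (u2 p2, p2)" | "lexl (u2 p2, p2) (u1 p1, p1)"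
          using lexl_total by blast
        then show False
        proof cases
          case 1 then show False using NN_mono[OF Vw1 n1 vc1 vc2] eq by simp
        next
          case 2 then show False using NN_mono[OF Vw1 n1 vc2 vc1] eq by simp
        qed
      qed
    qed
    show ?thesis
    proof (intro allI impI)
      fix r assume r: "r < Suc n"
      consider "r < p1" | "r = p1" | "r > p1" by arith
      then show "u1 r = u2 r"
      proof cases
        case 1
        have "p1 = p2" using ceq by simp
        have "r < n" using 1 p1(1) by simp
        then have "?w1 r = ?w2 r" using ww by simp
        then show ?thesis using 1 \<open>p1 = p2\<close> unfolding del_def by simp
      next
        case 2 then show ?thesis using ceq by auto
      next
        case 3
        have "?w1 (r - 1) = ?w2 (r - 1)" using ww 3 r by auto
        moreover have "Suc (r - 1) = r" "\<not> r - 1 < p1" using 3 by auto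
        ultimately show ?thesis using ceq unfolding del_def by auto
      qed
    qed
  qed
qed


definition mm :: "bool \<Rightarrow> nat \<Rightarrow> nat \<Rightarrow> nat" where
  "mm e k n = (if e then k * n + 1 else k * n - 1)"

definition levf :: "nat \<Rightarrow> nat set \<Rightarrow> nat \<Rightarrow> nat" where
  "levf n D r = (LEAST q. q * n + r \<in> D)"

lemma Gamma_mem: "x \<in> Gamma m n \<longleftrightarrow> (\<exists>a b. x = a * m + b * n)"
  unfolding Gamma_def by auto

lemma bigG:
  assumes n1: "1 \<le> n" and k1: "1 \<le> k" and x: "n * n * k \<le> x"
  shows "x \<in> Gamma (mm e k n) n"
proof -
  define q where "q = x div n"
  define r where "r = x mod n"
  have xqr: "x = q * n + r" unfolding q_def r_def by simp
  have rn: "r < n" unfolding r_def using n1 by simp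
  have qb: "n * k \<le> q"
  proof -
    have "n * k * n \<le> x" using x by (simp add: ac_simps)
    then have "(n * k * n) div n \<le> x div n" by (rule div_le_mono)
    then show ?thesis unfolding q_def using n1 by simp
  qed
  show ?thesis
  proof (cases e)
    case True
    have rk: "r * k \<le> q" using qb rn by (meson le_trans less_imp_le_nat mult_le_mono1)
    have "int (r * (k * n + 1) + (q - r * k) * n) = int (q * n + r)"
      using rk by (simp add: of_nat_diff algebra_simps)
    then have "r * (k * n + 1) + (q - r * k) * n = x" using xqr by linarith
    then show ?thesis unfolding Gamma_mem mm_def using True by metis
  next
    case False
    show ?thesis
    proof (cases "r = 0")
      case True
      then have "x = 0 * mm e k n + q * n" using xqr by simp
      then show ?thesis unfolding Gamma_mem by blast
    next
      case r0: False
      have kn1: "1 \<le> k * n" using n1 k1 by simp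
      have t1: "(n - r) * k \<le> q + 1" using qb by (meson diff_le_self le_trans mult_le_mono1 trans_le_add1)
      have t2: "n - r \<le> (n - r) * (k * n)" using kn1 by simp
      have h1: "int (n - r) = int n - int r" using rn by simp
      have h2: "int (k * n - 1) = int k * int n - 1" using kn1 by (simp add: of_nat_diff)
      have h3: "int (q + 1 - (n - r) * k) = int q + 1 - (int n - int r) * int k"
        using t1 h1 by (simp add: of_nat_diff)
      have "int ((n - r) * (k * n - 1) + (q + 1 - (n - r) * k) * n)
          = (int n - int r) * (int k * int n - 1) + (int q + 1 - (int n - int r) * int k) * int n"
        by (simp only: of_nat_add of_nat_mult h1 h2 h3)
      also have "\<dots> = int (q * n + r)" by (simp add: algebra_simps)
      finally have "int ((n - r) * (k * n - 1) + (q + 1 - (n - r) * k) * n) = int (q * n + r)" .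
      then have "(n - r) * (k * n - 1) + (q + 1 - (n - r) * k) * n = x" using xqr by linarith
      then show ?thesis unfolding Gamma_mem mm_def using False by metis
    qed
  qed
qed

locale sctx =
  fixes e :: bool and k n m :: nat and D :: "nat set"
  assumes n1: "1 \<le> n" and k1: "1 \<le> k" and mdef: "m = mm e k n" and m1: "1 \<le> m"
    and sem: "semimodule m n D" and zn: "zero_normalized D"
begin

lemma zero_in: "0 \<in> D"
proof -
  obtain x where "x \<in> D" using zn unfolding zero_normalized_def by auto
  then have "(LEAST x. x \<in> D) \<in> D" by (rule LeastI)
  then show ?thesis using zn unfolding zero_normalized_def by simp
qed

lemma addG: "x \<in> D \<Longrightarrow> x + (a * m + b * n) \<in> D"
proof -
  assume "x \<in> D"
  moreover have "a * m + b * n \<in> Gamma m n" unfolding Gamma_mem by blast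
  ultimately show ?thesis using sem unfolding semimodule_def by blast
qed

lemma add_m: "x \<in> D \<Longrightarrow> x + m \<in> D" using addG[of x 1 0] by simp
lemma add_n: "x \<in> D \<Longrightarrow> x + n \<in> D" using addG[of x 0 1] by simp
lemma add_cn: "x \<in> D \<Longrightarrow> x + c * n \<in> D" using addG[of x 0 c] by simp
lemma add_cm: "x \<in> D \<Longrightarrow> x + c * m \<in> D" using addG[of x c 0] by simp

lemma big_in: "n * n * k \<le> x \<Longrightarrow> x \<in> D"
proof -
  assume "n * n * k \<le> x"
  then have "x \<in> Gamma m n" using bigG n1 k1 mdef by simp
  then obtain a b where "x = a * m + b * n" unfolding Gamma_mem by auto
  then show ?thesis using addG[OF zero_in, of a b] by simp
qed

abbreviation "lev \<equiv> levf n D"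

lemma lev_in: "r < n \<Longrightarrow> lev r * n + r \<in> D"
proof -
  assume r: "r < n"
  have "(n * k) * n + r \<in> D" by (rule big_in) (simp add: ac_simps)
  then show ?thesis unfolding levf_def by (rule LeastI)
qed

lemma memq: "r < n \<Longrightarrow> q * n + r \<in> D \<longleftrightarrow> lev r \<le> q"
proof
  assume "r < n" "q * n + r \<in> D"
  then show "lev r \<le> q" unfolding levf_def by (auto intro: Least_le)
next
  assume r: "r < n" and "lev r \<le> q"
  then have "q = lev r + (q - lev r)" by simp
  then have "q * n + r = (lev r * n + r) + (q - lev r) * n" by (metis add.commute add.left_commute distrib_right)
  then show "q * n + r \<in> D" using add_cn[OF lev_in[OF r], of "q - lev r"] by metis
qed

lemma mem_iff: "x \<in> D \<longleftrightarrow> lev (x mod n) \<le> x div n"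
  using memq[of "x mod n" "x div n"] n1 by simp

lemma V_lev: "V e k n lev"
proof -
  have l0: "lev 0 = 0" using memq[of 0 0] zero_in n1 by simp
  show ?thesis
  proof (cases e)
    case True
    have "lev r \<le> lev (r - 1) + k" if "0 < r" "r < n" for r
    proof -
      have "lev (r - 1) * n + (r - 1) + m \<in> D" using add_m[OF lev_in[of "r - 1"]] that by linarith
      moreover have "lev (r - 1) * n + (r - 1) + m = (lev (r - 1) + k) * n + r"
        using that True mdef unfolding mm_def by (simp add: algebra_simps)
      ultimately show ?thesis using memq[OF that(2)] by simp
    qed
    then show ?thesis using l0 True unfolding V_def by auto
  next
    case False
    have mm': "m = k * n - 1" using False mdef unfolding mm_def by simp
    have kn: "1 \<le> k * n" using n1 k1 by simp
    have "lev r \<le> lev (Suc r) + k" if "Suc r < n" for r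
    proof -
      have "lev (Suc r) * n + Suc r + m \<in> D" using add_m[OF lev_in[of "Suc r"]] that by linarith
      moreover have "lev (Suc r) * n + Suc r + m = (lev (Suc r) + k) * n + r"
        using kn mm' by (simp add: algebra_simps)
      ultimately have "(lev (Suc r) + k) * n + r \<in> D" by metis
      then show ?thesis using memq[of r] that by simp
    qed
    moreover have "lev (n - 1) \<le> k - 1"
    proof -
      have "0 + m \<in> D" using add_m zero_in by blast
      moreover have "0 + m = (k - 1) * n + (n - 1)" using mm' kn n1 k1
        by (simp add: algebra_simps diff_mult_distrib)
      ultimately show ?thesis using memq[of "n - 1" "k - 1"] n1 by simp
    qed
    ultimately show ?thesis using l0 False unfolding V_def by auto
  qed
qed

end

definition pos :: "nat \<Rightarrow> nat \<Rightarrow> nat \<times> nat" where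
  "pos n a = ((a + n) div n, (a + n) mod n)"

context sctx begin

lemma l0: "lev 0 = 0" using memq[of 0 0] zero_in n1 by simp

lemma mgen_cond:
  assumes r: "r < n"
  shows "(qa * n + r < m \<or> qa * n + r - m \<notin> D) \<longleftrightarrow> qa + 1 \<le> Lf e k n lev r"
proof (cases e)
  case True
  have mm': "m = k * n + 1" using True mdef unfolding mm_def by simp
  show ?thesis
  proof (cases "r = 0")
    case False
    have Lf: "Lf e k n lev r = lev (r - 1) + k" using True False unfolding Lf_def by simp
    show ?thesis
    proof (cases "k \<le> qa")
      case True
      then obtain t where t: "qa = k + t" using le_Suc_ex by blast
      have a1: "\<not> qa * n + r < m" using False mm' t by (simp add: algebra_simps)
      have a2: "qa * n + r - m = t * n + (r - 1)" using False mm' t by (simp add: algebra_simps)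
      have "t * n + (r - 1) \<in> D \<longleftrightarrow> lev (r - 1) \<le> t" using memq[of "r - 1" t] r by simp
      then show ?thesis using a1 a2 Lf t by auto
    next
      case F: False
      have "qa * n \<le> (k - 1) * n" using F by (intro mult_le_mono1) simp
      moreover have "(k - 1) * n = k * n - n" by (simp add: diff_mult_distrib)
      moreover have "n \<le> k * n" using k1 by simp
      ultimately have "qa * n + r < m" using mm' r by linarith
      then show ?thesis using Lf F by simp
    qed
  next
    case r0: True
    have Lf: "Lf e k n lev r = lev (n - 1) + k + 1" using True r0 unfolding Lf_def by simp
    show ?thesis
    proof (cases "k + 1 \<le> qa")
      case True
      then obtain t where t: "qa = k + 1 + t" using le_Suc_ex by blast
      have a1: "\<not> qa * n + r < m" using n1 mm' t by (simp add: algebra_simps)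
      have a2: "qa * n + r - m = t * n + (n - 1)" using r0 mm' t n1 by (simp add: algebra_simps)
      have "t * n + (n - 1) \<in> D \<longleftrightarrow> lev (n - 1) \<le> t" using memq[of "n - 1" t] n1 by simp
      then show ?thesis using a1 a2 Lf t r0 by auto
    next
      case F: False
      have "qa * n \<le> k * n" using F by (intro mult_le_mono1) simp
      then have "qa * n + r < m" using mm' r0 by linarith
      then show ?thesis using Lf F by simp
    qed
  qed
next
  case False
  have mm': "m = k * n - 1" using False mdef unfolding mm_def by simp
  have kn: "1 \<le> k * n" using n1 k1 by simp
  show ?thesis
  proof (cases "Suc r < n")
    case True
    have Lf: "Lf e k n lev r = lev (Suc r) + k" using False True unfolding Lf_def by simp
    show ?thesis
    proof (cases "k \<le> qa")
      case True
      then obtain t where t: "qa = k + t" using le_Suc_ex by blast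
      have a1: "\<not> qa * n + r < m" using kn mm' t by (simp add: algebra_simps)
      have a2: "qa * n + r - m = t * n + Suc r" using kn mm' t by (simp add: algebra_simps)
      have "t * n + Suc r \<in> D \<longleftrightarrow> lev (Suc r) \<le> t" using memq[of "Suc r" t] \<open>Suc r < n\<close> by simp
      then show ?thesis using a1 a2 Lf t by auto
    next
      case F: False
      have "qa * n \<le> (k - 1) * n" using F by (intro mult_le_mono1) simp
      moreover have "(k - 1) * n = k * n - n" by (simp add: diff_mult_distrib)
      moreover have "n \<le> k * n" using k1 by simp
      ultimately have "qa * n + r < m" using mm' True by linarith
      then show ?thesis using Lf F by simp
    qed
  next
    case rl: False
    then have rn: "r = n - 1" using r by simp
    have Lf: "Lf e k n lev r = k - 1" using False rl r unfolding Lf_def by simp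
    show ?thesis
    proof (cases "k \<le> qa + 1")
      case True
      then obtain t where t: "qa + 1 = k + t" using le_Suc_ex by blast
      have eqa: "qa * n + r = (qa + 1) * n - 1" using rn n1 by (simp add: algebra_simps)
      have tt: "(qa + 1) * n = k * n + t * n" using t by (simp add: algebra_simps)
      have a1: "\<not> qa * n + r < m" using eqa mm' tt kn by linarith
      have a2: "qa * n + r - m = t * n + 0" using eqa mm' tt kn by linarith
      have "t * n + 0 \<in> D" using memq[of 0 t] n1 l0 by simp
      then show ?thesis using a1 a2 Lf t True k1 by auto
    next
      case F: False
      have "(qa + 1) * n \<le> (k - 1) * n" using F by (intro mult_le_mono1) simp
      then have "qa * n + r < m" using mm' rn n1 k1 by (simp add: diff_mult_distrib algebra_simps)
      then show ?thesis using Lf F by simp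
    qed
  qed
qed

lemma pos_eq: "pos n a = (a div n + 1, a mod n)"
  unfolding pos_def using n1 by simp

lemma mgen_iff: "a \<in> m_generators m D \<longleftrightarrow> pos n a \<in> As e k n lev"
proof -
  have r: "a mod n < n" using n1 by simp
  have 1: "a \<in> D \<longleftrightarrow> lev (a mod n) < a div n + 1" using mem_iff[of a] by linarith
  have 2: "(a < m \<or> a - m \<notin> D) \<longleftrightarrow> a div n + 1 \<le> Lf e k n lev (a mod n)"
    using mgen_cond[OF r, of "a div n"] by (simp only: div_mult_mod_eq)
  have 3: "a \<in> m_generators m D \<longleftrightarrow> a \<in> D \<and> (a < m \<or> a - m \<notin> D)"
    unfolding m_generators_def by simp
  have 4: "pos n a \<in> As e k n lev \<longleftrightarrow> lev (a mod n) < a div n + 1 \<and> a div n + 1 \<le> Lf e k n lev (a mod n)"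
    unfolding As_def pos_eq using r by simp
  show ?thesis using 1 2 3 4 by blast
qed

lemma pos_inj: "inj (pos n)"
proof (rule injI)
  fix a b assume "pos n a = pos n b"
  then have "a div n = b div n" "a mod n = b mod n" unfolding pos_eq by auto
  then show "a = b" by (metis div_mult_mod_eq)
qed

lemma pos_img: "pos n ` m_generators m D = As e k n lev"
proof
  show "pos n ` m_generators m D \<subseteq> As e k n lev" using mgen_iff by auto
next
  show "As e k n lev \<subseteq> pos n ` m_generators m D"
  proof
    fix x assume x: "x \<in> As e k n lev"
    obtain q r where xe: "x = (q, r)" by (cases x)
    have r: "r < n" "lev r < q" using x xe unfolding As_def by auto
    define a where "a = (q - 1) * n + r"
    have "pos n a = (q, r)" unfolding pos_eq a_def using r by simp
    then have "a \<in> m_generators m D" using mgen_iff x xe by simp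
    then show "x \<in> pos n ` m_generators m D" using \<open>pos n a = (q, r)\<close> xe by (intro image_eqI[of _ _ a]) auto
  qed
qed

lemma finite_mgens: "finite (m_generators m D)"
proof (rule finite_imageD[of "pos n"])
  show "finite (pos n ` m_generators m D)" unfolding pos_img by (rule finite_As)
  show "inj_on (pos n) (m_generators m D)" using pos_inj by (rule inj_on_subset) simp
qed

lemma g_cnt:
  assumes aD: "a \<in> D"
  shows "g_fun n D a = cntC n lev (pos n a)"
proof -
  define qa where "qa = a div n"
  define r0 where "r0 = a mod n"
  have a: "a = qa * n + r0" unfolding qa_def r0_def by simp
  have r0n: "r0 < n" unfolding r0_def using n1 by simp
  have lr0: "lev r0 \<le> qa" using aD mem_iff unfolding qa_def r0_def by simp
  define z where "z r = (if r0 \<le> r then qa * n + r else (qa + 1) * n + r)" for r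
  have zmod: "z r mod n = r" if "r < n" for r
  proof -
    have h: "(c * n + r) mod n = r" for c using that by simp
    show ?thesis using h[of qa] h[of "qa + 1"] unfolding z_def by auto
  qed
  have zinj: "inj_on z {..<n}"
    by (rule inj_onI) (metis lessThan_iff zmod)
  have zsub: "z ` {..<n} \<subseteq> {a..<a + n}" unfolding z_def a using r0n by auto
  have zimg: "z ` {..<n} = {a..<a + n}"
    using zsub by (intro card_subset_eq) (auto simp: card_image[OF zinj])
  have S: "{r. r < n \<and> z r \<notin> D} = {r. r < n \<and> lexl (qa + 1, r0) (lev r, r)}"
  proof -
    have "z r \<notin> D \<longleftrightarrow> lexl (qa + 1, r0) (lev r, r)" if r: "r < n" for r
    proof (cases "r0 \<le> r")
      case True
      then have "z r \<notin> D \<longleftrightarrow> \<not> lev r \<le> qa" unfolding z_def using memq[OF r] by simp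
      then show ?thesis using True lr0 unfolding lexl_def by (cases "r = r0") auto
    next
      case False
      then have "z r \<notin> D \<longleftrightarrow> \<not> lev r \<le> qa + 1" unfolding z_def using memq[OF r, of "Suc qa"] by simp
      then show ?thesis using False unfolding lexl_def by auto
    qed
    then show ?thesis by auto
  qed
  have "{a..<a + n} - D = z ` {r. r < n \<and> z r \<notin> D}" unfolding zimg[symmetric] by auto
  moreover have "inj_on z {r. r < n \<and> z r \<notin> D}" using zinj by (rule inj_on_subset) auto
  ultimately have "g_fun n D a = card {r. r < n \<and> lexl (qa + 1, r0) (lev r, r)}"
    unfolding g_fun_def S[symmetric] by (simp add: card_image)
  moreover have "cntC n lev (pos n a) = card {r. r < n \<and> lexl (qa + 1, r0) (lev r, r)}"
  proof -
    have "{y \<in> Cs n lev. lexl (qa + 1, r0) y} = (\<lambda>r. (lev r, r)) ` {r. r < n \<and> lexl (qa + 1, r0) (lev r, r)}"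
      unfolding Cs_def by auto
    moreover have "inj (\<lambda>r. (lev r, r))" by (rule injI) auto
    ultimately show ?thesis unfolding cntC_def pos_eq qa_def[symmetric] r0_def[symmetric]
      by (simp add: card_image inj_on_subset)
  qed
  ultimately show ?thesis by simp
qed

lemma T_D: "card {a \<in> m_generators m D. s \<le> g_fun n D a} = T e k n lev s"
proof -
  have "{x \<in> As e k n lev. s \<le> cntC n lev x} = pos n ` {a \<in> m_generators m D. s \<le> g_fun n D a}"
    unfolding pos_img[symmetric] using g_cnt unfolding m_generators_def by auto
  then show ?thesis unfolding T_def by (simp add: card_image inj_on_subset[OF pos_inj])
qed

lemma G_filter: "length (filter (\<lambda>h. s \<le> h) (G_m m n D)) = card {a \<in> m_generators m D. s \<le> g_fun n D a}"
proof -
  let ?xs = "sorted_list_of_set (m_generators m D)"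
  have "length (filter (\<lambda>h. s \<le> h) (G_m m n D)) = length (filter (\<lambda>a. s \<le> g_fun n D a) ?xs)"
    unfolding G_m_def by (simp add: filter_map comp_def)
  also have "\<dots> = card ({a. s \<le> g_fun n D a} \<inter> set ?xs)"
    by (rule distinct_length_filter) simp
  also have "\<dots> = card {a \<in> m_generators m D. s \<le> g_fun n D a}"
    using finite_mgens by (simp add: Collect_conj_eq Int_commute)
  finally show ?thesis .
qed

end

lemma G_inj:
  assumes d1: "sctx e k n m D1" and d2: "sctx e k n m D2" and G: "G_m m n D1 = G_m m n D2"
  shows "D1 = D2"
proof -
  interpret a: sctx e k n m D1 by (rule d1)
  interpret b: sctx e k n m D2 by (rule d2)
  have "\<forall>s\<ge>1. T e k n (levf n D1) s = T e k n (levf n D2) s"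
  proof (intro allI impI)
    fix s :: nat
    have "T e k n (levf n D1) s = length (filter (\<lambda>h. s \<le> h) (G_m m n D1))"
      using a.T_D[of s] a.G_filter[of s] by simp
    also have "\<dots> = T e k n (levf n D2) s"
      using b.T_D[of s] b.G_filter[of s] G by simp
    finally show "T e k n (levf n D1) s = T e k n (levf n D2) s" .
  qed
  then have "\<forall>r<n. levf n D1 r = levf n D2 r"
    using comb_inj[OF a.k1 a.n1 a.V_lev b.V_lev] by blast
  then show ?thesis
  proof -
    assume h: "\<forall>r<n. levf n D1 r = levf n D2 r"
    show ?thesis
    proof (rule set_eqI)
      fix x
      have "x mod n < n" using a.n1 by simp
      then show "x \<in> D1 \<longleftrightarrow> x \<in> D2" using a.mem_iff[of x] b.mem_iff[of x] h by simp
    qed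
  qed
qed


definition chi :: "nat \<Rightarrow> nat set \<Rightarrow> nat \<Rightarrow> nat" where
  "chi m D t = (if m \<le> t \<and> t - m \<in> D then 1 else 0)"
definition psi :: "nat \<Rightarrow> nat set \<Rightarrow> nat \<Rightarrow> nat" where
  "psi m D c = (\<Sum>t\<in>{Suc c..c + m}. chi m D t)"
definition bet :: "nat \<Rightarrow> nat \<Rightarrow> nat set \<Rightarrow> nat \<Rightarrow> nat" where
  "bet m n D t = (\<Sum>z\<in>{t..<t + n}. chi m D z)"

lemma card_filter_sum: "finite S \<Longrightarrow> card {x \<in> S. P x} = (\<Sum>x\<in>S. if P x then 1 else 0)"
  by (simp add: sum.inter_filter[symmetric])

lemma real_box:
  assumes "0 < m" "0 < n" "a * n + j * m \<le> m * (n::nat)"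
  shows "real a / real m + real j / real n \<le> 1"
proof -
  have "real a / real m + real j / real n = real (a * n + j * m) / real (m * n)"
    using assms by (simp add: field_simps)
  also have "\<dots> \<le> 1"
  proof -
    have "real (a * n + j * m) \<le> real (m * n)" using assms(3) by (simp only: of_nat_le_iff)
    then show ?thesis using assms(1,2) by (simp add: divide_le_eq_1)
  qed
  finally show ?thesis .
qed

context sctx begin

lemma mgen_mod_inj:
  assumes a: "a \<in> m_generators m D" and b: "b \<in> m_generators m D" and eq: "a mod m = b mod m"
  shows "a = b"
proof (rule ccontr)
  assume ne: "a \<noteq> b"
  have main: "x = y" if x: "x \<in> m_generators m D" and y: "y \<in> m_generators m D"
    and xy: "x < y" and eqm: "y mod m = x mod m" for x y
  proof -
    have "m dvd y - x" using eqm xy mod_eq_dvd_iff_nat[of x y m] by simp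
    then obtain j where j: "y - x = m * j" by (auto elim: dvdE)
    have j1: "1 \<le> j" using j xy by (cases j) auto
    have yx: "y = x + m * j" using j xy by simp
    have "x \<in> D" using x unfolding m_generators_def by auto
    then have "x + (j - 1) * m \<in> D" by (rule add_cm)
    moreover have "y - m = x + (j - 1) * m" using yx j1 by (simp add: algebra_simps diff_mult_distrib2)
    moreover have "m \<le> y" using yx j1 by (metis le_add2 mult.commute mult_le_mono1 nat_mult_1 order_trans)
    ultimately show "x = y" using y unfolding m_generators_def by auto
  qed
  consider "a < b" | "b < a" using ne by arith
  then show False
  proof cases
    case 1 then show False using main[OF a b 1] eq ne by simp
  next
    case 2 then show False using main[OF b a 2] eq ne by simp
  qed
qed

lemma card_mgens: "card (m_generators m D) = m"
proof -
  have inj: "inj_on (\<lambda>a. a mod m) (m_generators m D)"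
    by (rule inj_onI) (rule mgen_mod_inj)
  have img: "(\<lambda>a. a mod m) ` m_generators m D = {..<m}"
  proof
    show "(\<lambda>a. a mod m) ` m_generators m D \<subseteq> {..<m}" using m1 by auto
  next
    show "{..<m} \<subseteq> (\<lambda>a. a mod m) ` m_generators m D"
    proof
      fix s assume s: "s \<in> {..<m}"
      define P where "P x \<longleftrightarrow> x \<in> D \<and> x mod m = s" for x
      define x0 where "x0 = (n * n * k) * m + s"
      have "n * n * k \<le> x0" unfolding x0_def using m1 by (metis le_add1 mult.right_neutral mult_le_mono2 order_trans)
      then have "P x0" unfolding P_def x0_def using big_in s by simp
      define a where "a = (LEAST x. P x)"
      have Pa: "P a" unfolding a_def using \<open>P x0\<close> by (rule LeastI)
      have "a \<in> m_generators m D"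
      proof -
        have "\<not> (m \<le> a \<and> a - m \<in> D)"
        proof
          assume h: "m \<le> a \<and> a - m \<in> D"
          have "(a - m) mod m = a mod m" using h by (metis le_add_diff_inverse2 mod_add_self2)
          then have "P (a - m)" using Pa h unfolding P_def by simp
          moreover have "a - m < a" using h m1 by simp
          ultimately show False unfolding a_def using not_less_Least by blast
        qed
        then show ?thesis using Pa unfolding P_def m_generators_def by auto
      qed
      then show "s \<in> (\<lambda>a. a mod m) ` m_generators m D" using Pa unfolding P_def by force
    qed
  qed
  show ?thesis using card_image[OF inj] img by simp
qed

lemma length_G: "length (G_m m n D) = m"
  unfolding G_m_def using card_mgens finite_mgens by simp

lemma g_step: "g_fun n D (Suc a) \<le> g_fun n D a"
proof -
  define f where "f z = (if z = a + n then a else z)" for z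
  have "inj_on f ({Suc a..<Suc a + n} - D)" unfolding f_def by (rule inj_onI) (auto split: if_splits)
  moreover have "f ` ({Suc a..<Suc a + n} - D) \<subseteq> {a..<a + n} - D"
  proof
    fix y assume "y \<in> f ` ({Suc a..<Suc a + n} - D)"
    then obtain z where z: "z \<in> {Suc a..<Suc a + n} - D" "y = f z" by auto
    show "y \<in> {a..<a + n} - D"
    proof (cases "z = a + n")
      case True
      then have "a \<notin> D" using z add_n by blast
      then show ?thesis using z True n1 unfolding f_def by auto
    next
      case False then show ?thesis using z unfolding f_def by auto
    qed
  qed
  ultimately show ?thesis unfolding g_fun_def by (intro card_inj_on_le) auto
qed

lemma g_anti: "a \<le> b \<Longrightarrow> g_fun n D b \<le> g_fun n D a"
  by (rule lift_Suc_antimono_le[of "g_fun n D"]) (auto intro: g_step)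

lemma G_sorted: "sorted_wrt (\<ge>) (G_m m n D)"
proof -
  have "sorted (sorted_list_of_set (m_generators m D))" by simp
  then have "sorted_wrt (\<lambda>x y. g_fun n D y \<le> g_fun n D x) (sorted_list_of_set (m_generators m D))"
    by (rule sorted_wrt_mono_rel[rotated]) (auto intro: g_anti)
  then show ?thesis unfolding G_m_def by (simp add: sorted_wrt_map)
qed

end


context sctx begin

lemma chi_m: "chi m D (Suc c) \<le> chi m D (Suc c + m)"
proof -
  have "Suc c \<in> D" if "m \<le> Suc c" "Suc c - m \<in> D" using add_m[OF that(2)] that(1) by simp
  then show ?thesis unfolding chi_def by auto
qed

lemma chi_n: "chi m D t \<le> chi m D (t + n)"
proof -
  have "t + n - m \<in> D" if "m \<le> t" "t - m \<in> D" using add_n[OF that(2)] that(1) by (simp add: add.commute)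
  then show ?thesis unfolding chi_def by auto
qed

lemma psi_step: "psi m D c \<le> psi m D (Suc c)"
proof -
  have 1: "psi m D c = chi m D (Suc c) + (\<Sum>t\<in>{Suc (Suc c)..c + m}. chi m D t)"
    unfolding psi_def using m1 by (subst sum.atLeast_Suc_atMost) auto
  have 2: "psi m D (Suc c) = (\<Sum>t\<in>{Suc (Suc c)..c + m}. chi m D t) + chi m D (Suc (c + m))"
    unfolding psi_def using m1 by simp
  show ?thesis using 1 2 chi_m[of c] by simp
qed

lemma bet_step: "bet m n D t \<le> bet m n D (Suc t)"
proof -
  have 1: "bet m n D t = chi m D t + (\<Sum>z\<in>{Suc t..<t + n}. chi m D z)"
    unfolding bet_def using n1 by (subst sum.atLeast_Suc_lessThan) auto
  have 2: "bet m n D (Suc t) = (\<Sum>z\<in>{Suc t..<t + n}. chi m D z) + chi m D (t + n)"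
    unfolding bet_def using n1 by simp
  show ?thesis using 1 2 chi_n[of t] by simp
qed

lemma psi_mono: "c \<le> c' \<Longrightarrow> psi m D c \<le> psi m D c'"
  by (rule lift_Suc_mono_le[of "psi m D"]) (auto intro: psi_step)

lemma bet_mono: "t \<le> t' \<Longrightarrow> bet m n D t \<le> bet m n D t'"
  by (rule lift_Suc_mono_le[of "bet m n D"]) (auto intro: bet_step)

lemma double: "(\<Sum>t\<in>{Suc a..a + m}. bet m n D t) = (\<Sum>j\<in>{0..<n}. psi m D (a + j))"
proof -
  have b: "bet m n D t = (\<Sum>j\<in>{0..<n}. chi m D (j + t))" for t
  proof -
    have "bet m n D t = (\<Sum>z\<in>{0 + t..<n + t}. chi m D z)" unfolding bet_def by (simp add: add.commute)
    also have "\<dots> = (\<Sum>j\<in>{0..<n}. chi m D (j + t))" by (rule sum.shift_bounds_nat_ivl)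
    finally show ?thesis .
  qed
  have p: "psi m D (a + j) = (\<Sum>t\<in>{Suc a..a + m}. chi m D (j + t))" for j
  proof -
    have "psi m D (a + j) = (\<Sum>t\<in>{Suc a + j..(a + m) + j}. chi m D t)" unfolding psi_def
      by (simp add: ac_simps)
    also have "\<dots> = (\<Sum>t\<in>{Suc a..a + m}. chi m D (t + j))" by (rule sum.shift_bounds_cl_nat_ivl)
    finally show ?thesis by (simp add: add.commute)
  qed
  show ?thesis unfolding b p by (rule sum.swap)
qed

lemma bet_am: "bet m n D (a + m) = card (D \<inter> {a..<a + n})"
proof -
  have "bet m n D (a + m) = (\<Sum>z\<in>{a + m..<(a + n) + m}. chi m D z)" unfolding bet_def by (simp add: ac_simps)
  also have "\<dots> = (\<Sum>z\<in>{a..<a + n}. chi m D (z + m))" by (rule sum.shift_bounds_nat_ivl)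
  also have "\<dots> = (\<Sum>z\<in>{a..<a + n}. if z \<in> D then 1 else 0)" unfolding chi_def by simp
  also have "\<dots> = card {z \<in> {a..<a + n}. z \<in> D}" using card_filter_sum[of "{a..<a + n}" "\<lambda>z. z \<in> D"] by simp
  finally show ?thesis by (simp add: Int_def conj_commute)
qed

lemma key_ineq: "n * psi m D a \<le> m * card (D \<inter> {a..<a + n})"
proof -
  have "n * psi m D a = (\<Sum>j\<in>{0..<n}. psi m D a)" by simp
  also have "\<dots> \<le> (\<Sum>j\<in>{0..<n}. psi m D (a + j))" by (intro sum_mono psi_mono) simp
  also have "\<dots> = (\<Sum>t\<in>{Suc a..a + m}. bet m n D t)" by (rule double[symmetric])
  also have "\<dots> \<le> (\<Sum>t\<in>{Suc a..a + m}. bet m n D (a + m))" by (intro sum_mono bet_mono) simp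
  also have "\<dots> = m * bet m n D (a + m)" by simp
  finally show ?thesis unfolding bet_am .
qed

lemma mgens_le_psi: "card {b \<in> m_generators m D. b \<le> a} \<le> psi m D a"
proof -
  define f where "f b = b + m * Suc ((a - b) div m)" for b
  have "inj_on f {b \<in> m_generators m D. b \<le> a}"
  proof (rule inj_onI)
    fix b b' assume b: "b \<in> {b \<in> m_generators m D. b \<le> a}" and b': "b' \<in> {b \<in> m_generators m D. b \<le> a}"
      and eq: "f b = f b'"
    have "f b mod m = b mod m" "f b' mod m = b' mod m" unfolding f_def by (simp_all only: mod_mult_self2)
    then have "b mod m = b' mod m" using eq by simp
    then show "b = b'" using mgen_mod_inj b b' by auto
  qed
  moreover have "f ` {b \<in> m_generators m D. b \<le> a} \<subseteq> {t \<in> {Suc a..a + m}. m \<le> t \<and> t - m \<in> D}"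
  proof
    fix y assume "y \<in> f ` {b \<in> m_generators m D. b \<le> a}"
    then obtain b where b: "b \<in> m_generators m D" "b \<le> a" "y = f b" by auto
    define q where "q = (a - b) div m"
    have bD: "b \<in> D" using b unfolding m_generators_def by auto
    have y: "y = b + q * m + m" using b unfolding f_def q_def by (simp add: algebra_simps)
    have "y - m = b + q * m" using y by simp
    moreover have "b + q * m \<in> D" using add_cm[OF bD] by simp
    moreover have "q * m \<le> a - b" unfolding q_def by (rule div_times_less_eq_dividend)
    moreover have "a - b < q * m + m"
    proof -
      have "a - b = q * m + (a - b) mod m" unfolding q_def by simp
      moreover have "(a - b) mod m < m" using m1 by simp
      ultimately show ?thesis by linarith
    qed
    ultimately show "y \<in> {t \<in> {Suc a..a + m}. m \<le> t \<and> t - m \<in> D}" using y b(2) by auto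
  qed
  ultimately have "card {b \<in> m_generators m D. b \<le> a} \<le> card {t \<in> {Suc a..a + m}. m \<le> t \<and> t - m \<in> D}"
    by (intro card_inj_on_le) auto
  also have "\<dots> = psi m D a" unfolding psi_def chi_def
    using card_filter_sum[of "{Suc a..a + m}" "\<lambda>t. m \<le> t \<and> t - m \<in> D"] by simp
  finally show ?thesis .
qed

lemma idx_le:
  assumes i: "i < m"
  shows "i + 1 \<le> card {b \<in> m_generators m D. b \<le> sorted_list_of_set (m_generators m D) ! i}"
proof -
  let ?xs = "sorted_list_of_set (m_generators m D)"
  have len: "length ?xs = m" using card_mgens finite_mgens by simp
  have "card (nth ?xs ` {..i}) = i + 1"
    using inj_on_nth[of ?xs "{..i}"] len i by (simp add: card_image)
  moreover have "nth ?xs ` {..i} \<subseteq> {b \<in> m_generators m D. b \<le> ?xs ! i}"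
  proof
    fix y assume "y \<in> nth ?xs ` {..i}"
    then obtain j where j: "j \<le> i" "y = ?xs ! j" by auto
    have "y \<in> set ?xs" using j len i by auto
    then have "y \<in> m_generators m D" using finite_mgens by simp
    moreover have "y \<le> ?xs ! i" using j sorted_nth_mono[of ?xs j i] len i by simp
    ultimately show "y \<in> {b \<in> m_generators m D. b \<le> ?xs ! i}" by simp
  qed
  moreover have "finite {b \<in> m_generators m D. b \<le> ?xs ! i}" using finite_mgens by simp
  ultimately show ?thesis by (metis card_mono)
qed

lemma G_in_Y: "G_m m n D \<in> Y m n"
proof -
  let ?xs = "sorted_list_of_set (m_generators m D)"
  have len: "length ?xs = m" using card_mgens finite_mgens by simp
  have box: "real (i + 1) / real m + real j / real n \<le> 1"
    if i: "i < m" and j: "1 \<le> j" "j \<le> G_m m n D ! i" for i j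
  proof -
    define a where "a = ?xs ! i"
    have Gi: "G_m m n D ! i = g_fun n D a" unfolding G_m_def a_def using len i by simp
    have "a \<in> set ?xs" unfolding a_def using len i by simp
    then have aD: "a \<in> D" using finite_mgens unfolding m_generators_def by auto
    have "(i + 1) * n \<le> psi m D a * n"
      using idx_le[OF i] mgens_le_psi[of a] unfolding a_def by (intro mult_le_mono1) simp
    also have "\<dots> \<le> m * card (D \<inter> {a..<a + n})" using key_ineq[of a] by (simp add: mult.commute)
    finally have 1: "(i + 1) * n \<le> m * card (D \<inter> {a..<a + n})" .
    have 2: "card (D \<inter> {a..<a + n}) + g_fun n D a = n"
    proof -
      have "card ({a..<a + n} \<inter> D) + card ({a..<a + n} - D) = card {a..<a + n}"
        by (rule card_Int_Diff[symmetric]) simp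
      then show ?thesis unfolding g_fun_def by (simp add: Int_commute)
    qed
    have "(i + 1) * n + j * m \<le> m * n"
    proof -
      have "j * m \<le> g_fun n D a * m" using j Gi by simp
      moreover have "m * card (D \<inter> {a..<a + n}) + g_fun n D a * m = m * n"
        using 2 by (metis add_mult_distrib2 mult.commute)
      ultimately show ?thesis using 1 by linarith
    qed
    then show ?thesis using real_box[of m n "i + 1" j] m1 n1 by simp
  qed
  show ?thesis unfolding Y_def using length_G G_sorted box by auto
qed

end


definition cnt :: "nat \<Rightarrow> nat list \<Rightarrow> nat \<Rightarrow> nat" where
  "cnt m h s = card {i. i < m \<and> s \<le> h ! i}"

definition uY :: "bool \<Rightarrow> nat \<Rightarrow> nat \<Rightarrow> nat \<Rightarrow> nat list \<Rightarrow> nat \<Rightarrow> nat" where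
  "uY e k n m h r = (if e then r * k - cnt m h (n - r)
                    else (if r = 0 then 0 else (n - r) * k - cnt m h r - 1))"

definition Dof :: "nat \<Rightarrow> (nat \<Rightarrow> nat) \<Rightarrow> nat set" where
  "Dof n u = {x. u (x mod n) \<le> x div n}"

lemma divmod_form: "r < n \<Longrightarrow> (c * n + r) div n = c \<and> (c * n + r) mod n = (r::nat)"
  by simp

lemma Dof_mem: "r < n \<Longrightarrow> c * n + r \<in> Dof n u \<longleftrightarrow> u r \<le> c"
  unfolding Dof_def by simp

lemma cnt_anti: "s \<le> s' \<Longrightarrow> cnt m h s' \<le> cnt m h s"
  unfolding cnt_def by (intro card_mono) auto

lemma cnt_le: "cnt m h s \<le> m"
proof -
  have "cnt m h s \<le> card {..<m}" unfolding cnt_def by (intro card_mono) auto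
  then show ?thesis by simp
qed

locale yctx =
  fixes e :: bool and k n m :: nat
  assumes n1: "1 \<le> n" and k1: "1 \<le> k" and mdef: "m = mm e k n" and m1: "1 \<le> m"
begin

lemma Y_box:
  assumes h: "h \<in> Y m n" and i: "i < m" and s: "1 \<le> s" "s \<le> h ! i"
  shows "(i + 1) * n + s * m \<le> m * n"
proof -
  have r: "real (i + 1) / real m + real s / real n \<le> 1" using h i s unfolding Y_def by auto
  have "real ((i + 1) * n + s * m) = (real (i + 1) / real m + real s / real n) * (real m * real n)"
    using m1 n1 by (simp add: field_simps)
  also have "\<dots> \<le> 1 * (real m * real n)" using r by (intro mult_right_mono) auto
  finally have "real ((i + 1) * n + s * m) \<le> real (m * n)" by simp
  then show ?thesis by (simp only: of_nat_le_iff)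
qed

lemma Y_lt: assumes h: "h \<in> Y m n" and i: "i < m" shows "h ! i < n"
proof (rule ccontr)
  assume "\<not> h ! i < n"
  then have "(i + 1) * n + n * m \<le> m * n" using Y_box[OF h i, of n] n1 by simp
  then show False using n1 by (simp add: algebra_simps)
qed

lemma Y_idx:
  assumes h: "h \<in> Y m n" and i: "i < m" and s: "1 \<le> s" "s \<le> h ! i"
  shows "s < n \<and> (e \<longrightarrow> i + 1 \<le> (n - s) * k) \<and> (\<not> e \<longrightarrow> i + 2 \<le> (n - s) * k)"
proof -
  have sn: "s < n" using Y_lt[OF h i] s by simp
  have b: "(i + 1) * n + s * m \<le> m * n" by (rule Y_box[OF h i s])
  define A where "A = (n - s) * k"
  have nn: "s + (n - s) = n" using sn by simp
  have "s * m + (n - s) * m = (s + (n - s)) * m" by (simp only: add_mult_distrib)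
  then have mn: "m * n = s * m + (n - s) * m" using nn by (simp add: mult.commute)
  have 1: "(i + 1) * n \<le> (n - s) * m" using b mn by linarith
  have i1: "(i + 1) * n = i * n + n" by simp
  have "e \<longrightarrow> i + 1 \<le> A"
  proof
    assume e
    then have mm': "m = k * n + 1" using mdef unfolding mm_def by simp
    have eq: "(n - s) * m = A * n + (n - s)" unfolding mm' A_def
      by (simp only: add_mult_distrib2 mult.assoc mult_1_right)
    show "i + 1 \<le> A"
    proof (rule ccontr)
      assume "\<not> i + 1 \<le> A"
      then have "A * n \<le> i * n" by (intro mult_le_mono1) simp
      then show False using 1 eq i1 s sn by linarith
    qed
  qed
  moreover have "\<not> e \<longrightarrow> i + 2 \<le> A"
  proof
    assume ne: "\<not> e"
    then have mm': "m = k * n - 1" using mdef unfolding mm_def by simp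
    have a1: "n - s \<le> (n - s) * k" using k1 by simp
    have a2: "(n - s) * k \<le> (n - s) * k * n" using n1 by simp
    have An: "n - s \<le> A * n" unfolding A_def using a1 a2 by linarith
    have eq: "(n - s) * m = A * n - (n - s)" unfolding mm' A_def
      by (simp only: diff_mult_distrib2 mult.assoc mult_1_right)
    show "i + 2 \<le> A"
    proof (rule ccontr)
      assume "\<not> i + 2 \<le> A"
      then have "A * n \<le> (i + 1) * n" by (intro mult_le_mono1) simp
      then show False using 1 eq An sn by linarith
    qed
  qed
  ultimately show ?thesis using sn unfolding A_def by simp
qed

lemma cnt_big: "h \<in> Y m n \<Longrightarrow> n \<le> s \<Longrightarrow> cnt m h s = 0"
  unfolding cnt_def using Y_lt by (auto simp: card_eq_0_iff) (meson le_trans not_le)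

lemma cnt_bound_e:
  assumes h: "h \<in> Y m n" and e and s: "1 \<le> s"
  shows "cnt m h s \<le> (n - s) * k"
proof -
  have "{i. i < m \<and> s \<le> h ! i} \<subseteq> {..<(n - s) * k}"
  proof
    fix i assume "i \<in> {i. i < m \<and> s \<le> h ! i}"
    then have "i < m" "s \<le> h ! i" by auto
    then show "i \<in> {..<(n - s) * k}" using Y_idx[OF h \<open>i < m\<close> s \<open>s \<le> h ! i\<close>] \<open>e\<close> by auto
  qed
  then have "cnt m h s \<le> card {..<(n - s) * k}" unfolding cnt_def by (intro card_mono) auto
  then show ?thesis by simp
qed

lemma cnt_bound_ne:
  assumes h: "h \<in> Y m n" and ne: "\<not> e" and s: "1 \<le> s" "s < n"
  shows "cnt m h s + 1 \<le> (n - s) * k"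
proof -
  have A: "1 \<le> (n - s) * k" using s k1 by simp
  have "{i. i < m \<and> s \<le> h ! i} \<subseteq> {..<(n - s) * k - 1}"
  proof
    fix i assume "i \<in> {i. i < m \<and> s \<le> h ! i}"
    then have "i < m" "s \<le> h ! i" by auto
    then show "i \<in> {..<(n - s) * k - 1}" using Y_idx[OF h \<open>i < m\<close> s(1) \<open>s \<le> h ! i\<close>] ne by auto
  qed
  then have "cnt m h s \<le> card {..<(n - s) * k - 1}" unfolding cnt_def by (intro card_mono) auto
  then have "cnt m h s \<le> (n - s) * k - 1" by simp
  then show ?thesis using A by linarith
qed

lemma V_uY: assumes h: "h \<in> Y m n" shows "V e k n (uY e k n m h)"
proof (cases e)
  case True
  have "uY e k n m h r \<le> uY e k n m h (r - 1) + k" if r: "0 < r" "r < n" for r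
  proof -
    have a: "cnt m h (n - (r - 1)) \<le> cnt m h (n - r)" using r by (intro cnt_anti) simp
    have b: "cnt m h (n - (r - 1)) \<le> (r - 1) * k" using cnt_bound_e[OF h True, of "n - (r - 1)"] r by simp
    have "r = Suc (r - 1)" using r by simp
    then have c: "(r - 1) * k + k = r * k" by (metis add.commute mult_Suc)
    have d: "uY e k n m h r = r * k - cnt m h (n - r)" "uY e k n m h (r - 1) = (r - 1) * k - cnt m h (n - (r - 1))"
      unfolding uY_def using True by auto
    show ?thesis unfolding d using a b c by linarith
  qed
  then show ?thesis unfolding V_def uY_def using True by auto
next
  case False
  have "uY e k n m h r \<le> uY e k n m h (Suc r) + k" if r: "Suc r < n" for r
  proof (cases "r = 0")
    case True then show ?thesis unfolding uY_def using False by simp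
  next
    case r0: False
    have a: "cnt m h (Suc r) \<le> cnt m h r" by (intro cnt_anti) simp
    have b: "cnt m h (Suc r) + 1 \<le> (n - Suc r) * k" using cnt_bound_ne[OF h False, of "Suc r"] r by simp
    have "n - r = Suc (n - Suc r)" using r by simp
    then have c: "(n - Suc r) * k + k = (n - r) * k" by simp
    show ?thesis unfolding uY_def using False a b c r0 by simp
  qed
  moreover have "uY e k n m h (n - 1) \<le> k - 1" unfolding uY_def using False n1
    by (cases "n - 1 = 0") (auto simp: diff_diff_cancel)
  ultimately show ?thesis unfolding V_def uY_def using False by auto
qed

lemma Dof_S:
  assumes Vu: "V e k n u"
  shows "semimodule m n (Dof n u) \<and> zero_normalized (Dof n u)"
proof -
  have u0: "u 0 = 0" using Vu unfolding V_def by simp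
  have addn: "x + n \<in> Dof n u" if "x \<in> Dof n u" for x
    using that n1 unfolding Dof_def by simp
  have addm: "x + m \<in> Dof n u" if x: "x \<in> Dof n u" for x
  proof -
    define q where "q = x div n"
    define r where "r = x mod n"
    have xe: "x = q * n + r" unfolding q_def r_def by simp
    have rn: "r < n" unfolding r_def using n1 by simp
    have ur: "u r \<le> q" using x unfolding Dof_def q_def r_def by simp
    show ?thesis
    proof (cases e)
      case True
      have mm': "m = k * n + 1" using True mdef unfolding mm_def by simp
      show ?thesis
      proof (cases "Suc r < n")
        case True
        have "x + m = (q + k) * n + Suc r" using xe mm' by (simp add: algebra_simps)
        moreover have "u (Suc r) \<le> q + k" using Vu \<open>e\<close> True ur unfolding V_def by force
        ultimately show ?thesis using Dof_mem[OF True] by simp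
      next
        case False
        then have "Suc r = n" using rn by simp
        then have "x + m = (q + k + 1) * n + 0" using xe mm' by (simp add: algebra_simps)
        then show ?thesis using Dof_mem[where r=0 and n=n and u=u and c="q + k + 1"] n1 u0 by simp
      qed
    next
      case False
      have mm': "m = k * n - 1" using False mdef unfolding mm_def by simp
      have kn: "1 \<le> k * n" using k1 n1 by simp
      show ?thesis
      proof (cases "r = 0")
        case False
        have "(q + k) * n = q * n + k * n" by (simp add: algebra_simps)
        then have "x + m = (q + k) * n + (r - 1)" using xe mm' kn False by linarith
        moreover have "u (r - 1) \<le> u r + k"
        proof -
          have "\<forall>r. Suc r < n \<longrightarrow> u r \<le> u (Suc r) + k" using Vu \<open>\<not> e\<close> unfolding V_def by simp
          moreover have "Suc (r - 1) = r" using False by simp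
          ultimately show ?thesis using rn by metis
        qed
        ultimately show ?thesis using Dof_mem[where r="r - 1" and n=n and u=u and c="q + k"] rn ur by simp
      next
        case True
        have "Suc (q + k - 1) = q + k" using k1 by simp
        then have "(q + k - 1) * n + n = (q + k) * n" by (metis mult_Suc add.commute)
        moreover have "(q + k) * n = q * n + k * n" by (simp add: algebra_simps)
        ultimately have "x + m = (q + k - 1) * n + (n - 1)" using xe mm' kn True n1 by linarith
        moreover have "u (n - 1) \<le> k - 1" using Vu \<open>\<not> e\<close> unfolding V_def by simp
        ultimately show ?thesis using Dof_mem[where r="n - 1" and n=n and u=u and c="q + k - 1"] n1 k1 by simp
      qed
    qed
  qed
  have addam: "x + a * m \<in> Dof n u" if "x \<in> Dof n u" for x a
    using that
  proof (induction a arbitrary: x)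
    case 0 then show ?case by simp
  next
    case (Suc a)
    have "x + m + a * m \<in> Dof n u" using Suc.IH[OF addm[OF Suc.prems]] .
    then show ?case by (simp add: add.assoc)
  qed
  have addbn: "x + b * n \<in> Dof n u" if "x \<in> Dof n u" for x b
    using that
  proof (induction b arbitrary: x)
    case 0 then show ?case by simp
  next
    case (Suc b)
    have "x + n + b * n \<in> Dof n u" using Suc.IH[OF addn[OF Suc.prems]] .
    then show ?case by (simp add: add.assoc)
  qed
  have sem: "semimodule m n (Dof n u)"
    unfolding semimodule_def
  proof (intro ballI)
    fix x g assume x: "x \<in> Dof n u" and g: "g \<in> Gamma m n"
    then obtain a b where gab: "g = a * m + b * n" unfolding Gamma_mem by auto
    have "x + a * m + b * n \<in> Dof n u" using addbn[OF addam[OF x]] .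
    then show "x + g \<in> Dof n u" using gab by (simp add: add.assoc)
  qed
  have z: "0 \<in> Dof n u" unfolding Dof_def using u0 by simp
  then have "zero_normalized (Dof n u)" unfolding zero_normalized_def
    by (auto intro: Least_equality)
  then show ?thesis using sem by simp
qed

lemma lev_Dof: "r < n \<Longrightarrow> levf n (Dof n u) r = u r"
  unfolding levf_def using Dof_mem[where r=r and n=n and u=u] by (auto intro: Least_equality)

lemma dc_set:
  assumes sub: "A \<subseteq> {..<(M::nat)}" and dc: "\<And>i j. j < i \<Longrightarrow> i \<in> A \<Longrightarrow> j \<in> A"
  shows "A = {..<card A}"
proof -
  have fin: "finite A" using sub finite_subset by blast
  show ?thesis
  proof
    show "A \<subseteq> {..<card A}"
    proof
      fix i assume i: "i \<in> A"
      have "{..i} \<subseteq> A" using dc i by (auto simp: le_less)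
      then have "card {..i} \<le> card A" using fin by (rule card_mono[rotated])
      then show "i \<in> {..<card A}" by simp
    qed
  next
    show "{..<card A} \<subseteq> A"
    proof
      fix i assume i: "i \<in> {..<card A}"
      show "i \<in> A"
      proof (rule ccontr)
        assume "i \<notin> A"
        then have "A \<subseteq> {..<i}" using dc by (metis lessThan_iff not_less_iff_gr_or_eq subsetI)
        then have "card A \<le> i" using card_mono[of "{..<i}" A] by simp
        then show False using i by simp
      qed
    qed
  qed
qed

lemma cnt_char:
  assumes h: "h \<in> Y m n" and i: "i < m"
  shows "s \<le> h ! i \<longleftrightarrow> i < cnt m h s"
proof -
  have len: "length h = m" and srt: "sorted_wrt (\<ge>) h" using h unfolding Y_def by auto
  have "{i. i < m \<and> s \<le> h ! i} = {..<cnt m h s}" unfolding cnt_def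
  proof (rule dc_set[of _ m])
    fix a b assume ab: "b < a" "a \<in> {i. i < m \<and> s \<le> h ! i}"
    then have "h ! a \<le> h ! b" using sorted_wrt_nth_less[OF srt, of b a] len by simp
    then show "b \<in> {i. i < m \<and> s \<le> h ! i}" using ab by auto
  qed auto
  then show ?thesis using i by (metis (no_types, lifting) lessThan_iff mem_Collect_eq)
qed

lemma phi_inj:
  assumes h1: "h1 \<in> Y m n" and h2: "h2 \<in> Y m n" and eq: "Dof n (uY e k n m h1) = Dof n (uY e k n m h2)"
  shows "h1 = h2"
proof -
  have u: "uY e k n m h1 r = uY e k n m h2 r" if "r < n" for r
    using lev_Dof[OF that, of "uY e k n m h1"] lev_Dof[OF that, of "uY e k n m h2"] eq by simp
  have c: "cnt m h1 s = cnt m h2 s" if s: "1 \<le> s" for s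
  proof (cases "n \<le> s")
    case True then show ?thesis using cnt_big[OF h1] cnt_big[OF h2] by simp
  next
    case False
    show ?thesis
    proof (cases e)
      case True
      have r: "n - s < n" using s False by simp
      have "uY e k n m h1 (n - s) = uY e k n m h2 (n - s)" by (rule u[OF r])
      moreover have "n - (n - s) = s" using False by simp
      moreover have "cnt m h1 s \<le> (n - s) * k" "cnt m h2 s \<le> (n - s) * k"
        using cnt_bound_e[OF h1 True s] cnt_bound_e[OF h2 True s] by auto
      ultimately show ?thesis unfolding uY_def using True by simp
    next
      case ne: False
      have r: "s < n" using False by simp
      have "uY e k n m h1 s = uY e k n m h2 s" by (rule u[OF r])
      moreover have "cnt m h1 s + 1 \<le> (n - s) * k" "cnt m h2 s + 1 \<le> (n - s) * k"
        using cnt_bound_ne[OF h1 ne s r] cnt_bound_ne[OF h2 ne s r] by auto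
      ultimately show ?thesis unfolding uY_def using ne s by simp
    qed
  qed
  have len1: "length h1 = m" and len2: "length h2 = m" using h1 h2 unfolding Y_def by auto
  show ?thesis
  proof (rule nth_equalityI)
    show "length h1 = length h2" using len1 len2 by simp
  next
    fix i assume "i < length h1"
    then have i: "i < m" using len1 by simp
    have iff: "s \<le> h1 ! i \<longleftrightarrow> s \<le> h2 ! i" if "1 \<le> s" for s
      using cnt_char[OF h1 i, of s] cnt_char[OF h2 i, of s] c[OF that] by simp
    show "h1 ! i = h2 ! i"
    proof (rule antisym)
      show "h1 ! i \<le> h2 ! i" using iff[of "h1 ! i"] by (cases "h1 ! i = 0") auto
      show "h2 ! i \<le> h1 ! i" using iff[of "h2 ! i"] by (cases "h2 ! i = 0") auto
    qed
  qed
qed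

lemma finite_Y: "finite (Y m n)"
proof -
  have "Y m n \<subseteq> {xs. set xs \<subseteq> {..<n} \<and> length xs = m}"
  proof
    fix h assume h: "h \<in> Y m n"
    have len: "length h = m" using h unfolding Y_def by auto
    have "set h \<subseteq> {..<n}"
    proof
      fix x assume "x \<in> set h"
      then obtain i where "i < length h" "x = h ! i" by (auto simp: in_set_conv_nth)
      then show "x \<in> {..<n}" using Y_lt[OF h] len by auto
    qed
    then show "h \<in> {xs. set xs \<subseteq> {..<n} \<and> length xs = m}" using len by simp
  qed
  moreover have "finite {xs. set xs \<subseteq> {..<n} \<and> length xs = m}" by (rule finite_lists_length_eq) simp
  ultimately show ?thesis by (rule finite_subset)
qed

end


theorem mainTheorem2:
  fixes m n k :: nat
  assumes "n \<ge> 1" and "k \<ge> 1" and "m = k * n + 1 \<or> m = k * n - 1" and "m \<ge> 1"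
  shows "bij_betw (G_m m n) {D. semimodule m n D \<and> zero_normalized D} (Y m n)"
proof -
  obtain e where me: "m = mm e k n"
  proof (cases "m = k * n + 1")
    case True then show ?thesis using that[of True] unfolding mm_def by simp
  next
    case False then show ?thesis using that[of False] assms(3) unfolding mm_def by simp
  qed
  interpret yctx e k n m using assms me by unfold_locales auto
  let ?S = "{D. semimodule m n D \<and> zero_normalized D}"
  let ?phi = "\<lambda>h. Dof n (uY e k n m h)"
  have sc: "sctx e k n m D" if "D \<in> ?S" for D
    using that assms me by unfold_locales auto
  have inj: "inj_on (G_m m n) ?S"
    by (rule inj_onI) (rule G_inj[OF sc sc])
  have sub: "G_m m n ` ?S \<subseteq> Y m n" using sc sctx.G_in_Y by blast
  have phiinj: "inj_on ?phi (Y m n)" by (rule inj_onI) (rule phi_inj)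
  have phisub: "?phi ` Y m n \<subseteq> ?S" using Dof_S V_uY by blast
  have finS: "finite ?S"
  proof (rule finite_imageD[OF _ inj])
    show "finite (G_m m n ` ?S)" using finite_subset[OF sub finite_Y] .
  qed
  have "card (Y m n) \<le> card ?S" by (rule card_inj_on_le[OF phiinj phisub finS])
  also have "\<dots> = card (G_m m n ` ?S)" using card_image[OF inj] by simp
  finally have "G_m m n ` ?S = Y m n" using card_seteq[OF finite_Y sub] by simp
  then show ?thesis unfolding bij_betw_def using inj by simp
qed


end
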